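(* Let $n=p_1p_2\cdots p_r$, where $r\geq 3$ and $p_1<p_2<\cdots<p_r$ are primes. Then $$\delta(\mathcal{P}(C_n))=\min\{\deg(p_sp_{s+1}\cdots p_r) : 2\leq s\leq r\}.$$
   Context: For a finite group $G$, the power graph $\mathcal{P}(G)$ is the simple undirected graph with vertex set $G$ in which two distinct vertices are adjacent if one is an integral power of the other. $C_n$ denotes the cyclic group of order $n$, identified with $\mathbb{Z}_n=\{0,1,\ldots,n-1\}$, so a positive divisor $d<n$ of $n$ is regarded as the element $d\in\mathbb{Z}_n$. $\deg(a)$ is the degree of vertex $a$ in $\mathcal{P}(C_n)$ and $\delta$ denotes minimum degree. *)

theory Defs
  imports "HOL-Computational_Algebra.Primes"
begin

text \<open>The cyclic group C_n is modelled as Z_n = {0..<n} under addition mod n.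
  The integral powers of a in C_n are exactly the multiples (k * a) mod n.\<close>

definition cyc_powers :: "nat \<Rightarrow> nat \<Rightarrow> nat set" where
  "cyc_powers n a = {(k * a) mod n | k. True}"

definition pg_adj :: "nat \<Rightarrow> nat \<Rightarrow> nat \<Rightarrow> bool" where
  "pg_adj n a b \<longleftrightarrow> a \<noteq> b \<and> (b \<in> cyc_powers n a \<or> a \<in> cyc_powers n b)"

definition pg_deg :: "nat \<Rightarrow> nat \<Rightarrow> nat" where
  "pg_deg n a = card {b \<in> {0..<n}. pg_adj n a b}"

definition pg_min_deg :: "nat \<Rightarrow> nat" where
  "pg_min_deg n = Min (pg_deg n ` {0..<n})"

end

theory Submission
  imports Defs "HOL-Number_Theory.Number_Theory"
begin


lemma coprime_shift: "coprime (g*m + c) (m::nat) \<longleftrightarrow> coprime c m"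
  by (meson coprime_def dvd_add_right_iff dvd_mult)

lemma count_base: "m > 0 \<Longrightarrow> card {b. b < m \<and> coprime b (m::nat)} = totient m"
proof (cases "m = 1")
  case True
  have "{b. b < m \<and> coprime b m} = {0}" using True by auto
  then show ?thesis using True by simp
next
  case False
  assume "m > 0"
  with False have "{b. b < m \<and> coprime b m} = totatives m"
  proof (intro equalityI subsetI)
    fix x assume "x \<in> {b. b < m \<and> coprime b m}"
    hence x: "x < m" "coprime x m" by auto
    have "x \<noteq> 0" using x(2) False by (metis One_nat_def coprime_0_left_iff nat_dvd_1_iff_1)
    then show "x \<in> totatives m" using x by (simp add: totatives_def)
  next
    fix x assume "x \<in> totatives m"
    hence x: "x \<le> m" "coprime x m" by (auto simp: totatives_def)
    have "x \<noteq> m" using x(2) False by auto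
    then show "x \<in> {b. b < m \<and> coprime b m}" using x by simp
  qed
  then show ?thesis by (simp add: totient_def)
qed

lemma count_coprime: "m > 0 \<Longrightarrow> card {b. b < g*m \<and> coprime b (m::nat)} = g * totient m"
proof (induction g)
  case 0 then show ?case by simp
next
  case (Suc g)
  have eq: "{b. b < Suc g*m \<and> coprime b m} = {b. b < g*m \<and> coprime b m} \<union> (\<lambda>c. g*m + c) ` {c. c < m \<and> coprime c m}"
  proof (intro equalityI subsetI)
    fix x assume "x \<in> {b. b < Suc g*m \<and> coprime b m}"
    hence x: "x < g*m + m" "coprime x m" by auto
    show "x \<in> {b. b < g*m \<and> coprime b m} \<union> (\<lambda>c. g*m + c) ` {c. c < m \<and> coprime c m}"
    proof (cases "x < g*m")
      case True then show ?thesis using x by auto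
    next
      case False
      then have "x = g*m + (x - g*m)" "x - g*m < m" using x by auto
      moreover have "coprime (x - g*m) m" using x coprime_shift[of g m "x - g*m"] \<open>x = g*m + (x - g*m)\<close> by simp
      ultimately show ?thesis by blast
    qed
  next
    fix x assume "x \<in> {b. b < g*m \<and> coprime b m} \<union> (\<lambda>c. g*m + c) ` {c. c < m \<and> coprime c m}"
    then show "x \<in> {b. b < Suc g*m \<and> coprime b m}" by (auto simp: coprime_shift)
  qed
  have "card ((\<lambda>c. g*m + c) ` {c. c < m \<and> coprime c m}) = totient m"
    by (subst card_image) (auto simp: count_base Suc.prems)
  moreover have "{b. b < g*m \<and> coprime b m} \<inter> (\<lambda>c. g*m + c) ` {c. c < m \<and> coprime c m} = {}" by auto
  ultimately show ?case using Suc unfolding eq by (subst card_Un_disjoint) auto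
qed

lemma cyc_eq: assumes "n > 0" shows "cyc_powers n a = {b. b < n \<and> gcd a n dvd b}"
proof (intro equalityI subsetI)
  fix x assume "x \<in> cyc_powers n a"
  then obtain k where x: "x = (k*a) mod n" by (auto simp: cyc_powers_def)
  have "gcd a n dvd (k*a) mod n" by (simp add: dvd_mod_iff)
  then show "x \<in> {b. b < n \<and> gcd a n dvd b}" using x assms by auto
next
  fix x assume "x \<in> {b. b < n \<and> gcd a n dvd b}"
  hence x: "x < n" "gcd a n dvd x" by auto
  obtain k where "[a*k = x] (mod n)" using cong_solve_dvd_nat[OF x(2)] by blast
  hence "(k*a) mod n = x" using x(1) by (simp add: cong_def mult.commute)
  then show "x \<in> cyc_powers n a" unfolding cyc_powers_def by blast
qed

lemma adj_eq: assumes "n > 0" "a < n" "b < n"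
  shows "pg_adj n a b \<longleftrightarrow> a \<noteq> b \<and> (gcd a n dvd gcd b n \<or> gcd b n dvd gcd a n)"
  using assms by (auto simp: pg_adj_def cyc_eq)

definition H :: "nat \<Rightarrow> nat \<Rightarrow> nat" where
  "H n m = m + (n div m) * totient m - totient m"

lemma deg_eq:
  assumes n: "n > 0" and a: "a < n" and sqf: "coprime (gcd a n) (n div gcd a n)"
  shows "pg_deg n a = H n (n div gcd a n) - 1"
proof -
  define g where "g = gcd a n"
  define m where "m = n div g"
  have g0: "g > 0" using n by (simp add: g_def)
  have nm: "n = g * m" by (simp add: g_def m_def)
  have m0: "m > 0" using n nm by (cases m) auto
  have cop: "coprime g m" using sqf by (simp add: g_def m_def)
  define X where "X = {b. b < n \<and> g dvd gcd b n}"
  define Y where "Y = {b. b < n \<and> gcd b n dvd g}"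
  have adj: "{b \<in> {0..<n}. pg_adj n a b} = (X \<union> Y) - {a}"
    using adj_eq[OF n a] by (auto simp: X_def Y_def g_def)
  have aXY: "a \<in> X \<inter> Y" using a by (simp add: X_def Y_def g_def)
  have X: "X = (\<lambda>c. g*c) ` {..<m}"
  proof (intro equalityI subsetI)
    fix x assume "x \<in> X"
    hence x: "g dvd x" "x < n" by (auto simp: X_def)
    then obtain c where c: "x = g*c" by (elim dvdE)
    hence "c < m" using x(2) nm g0 by simp
    then show "x \<in> (\<lambda>c. g*c) ` {..<m}" using c by auto
  next
    fix x assume "x \<in> (\<lambda>c. g*c) ` {..<m}"
    then show "x \<in> X" using nm g0 by (auto simp: X_def nm)
  qed
  have cX: "card X = m" unfolding X using g0 by (subst card_image) (auto simp: inj_on_def)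
  have Y: "Y = {b. b < g*m \<and> coprime b m}"
  proof (intro equalityI subsetI)
    fix x assume "x \<in> Y"
    hence x: "x < g*m" "gcd x n dvd g" by (auto simp: Y_def nm)
    have "gcd x m dvd gcd x n" unfolding nm by simp
    hence "gcd x m dvd gcd g m" using x(2) by (meson dvd_trans gcd_dvd2 gcd_greatest)
    hence "coprime x m" using cop by (metis coprime_iff_gcd_eq_1 is_unit_gcd_iff)
    then show "x \<in> {b. b < g*m \<and> coprime b m}" using x by auto
  next
    fix x assume "x \<in> {b. b < g*m \<and> coprime b m}"
    hence x: "x < g*m" "coprime x m" by auto
    have "gcd x n = gcd x g" using x(2) by (simp add: nm gcd_mult_right_right_cancel)
    then show "x \<in> Y" using x by (simp add: Y_def nm)
  qed
  have cY: "card Y = g * totient m" unfolding Y using count_coprime[OF m0] .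
  have XY: "X \<inter> Y = (\<lambda>c. g*c) ` {c. c < m \<and> coprime c m}"
  proof (intro equalityI subsetI)
    fix x assume "x \<in> X \<inter> Y"
    then obtain c where c: "x = g*c" "c < m" "coprime c m" unfolding X Y by auto
    then show "x \<in> (\<lambda>c. g*c) ` {c. c < m \<and> coprime c m}" by auto
  next
    fix x assume "x \<in> (\<lambda>c. g*c) ` {c. c < m \<and> coprime c m}"
    then obtain c where c: "x = g*c" "c < m" "coprime c m" by auto
    have "gcd c m = 1" using c(3) by (rule coprime_imp_gcd_eq_1)
    hence "gcd x n = g" using c unfolding nm by (simp add: gcd_mult_distrib_nat[symmetric])
    then show "x \<in> X \<inter> Y" using c nm g0 by (auto simp: X_def Y_def)
  qed
  have cXY: "card (X \<inter> Y) = totient m" unfolding XY using g0 count_base[OF m0]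
    by (subst card_image) (auto simp: inj_on_def)
  have fin: "finite X" "finite Y" by (auto simp: X_def Y_def)
  have "card (X \<union> Y) + card (X \<inter> Y) = card X + card Y" using card_Un_Int[OF fin] by simp
  hence "card (X \<union> Y) = H n m" using cX cY cXY m0 by (simp add: H_def nm g0)
  moreover have "pg_deg n a = card (X \<union> Y) - 1"
    unfolding pg_deg_def adj using aXY fin by (subst card_Diff_singleton) auto
  ultimately show ?thesis by (simp add: m_def g_def)
qed



lemma div_subset:
  assumes "finite I" "inj_on p I" "\<And>i. i \<in> I \<Longrightarrow> prime (p i)" "d dvd (\<Prod>i\<in>I. p i :: nat)"
  shows "\<exists>S\<subseteq>I. d = (\<Prod>i\<in>S. p i)"
  using assms
proof (induction I arbitrary: d rule: finite_induct)
  case empty then show ?case by simp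
next
  case (insert i F)
  have pi: "prime (p i)" using insert.prems by simp
  have dv: "d dvd p i * (\<Prod>j\<in>F. p j)" using insert.prems insert.hyps by simp
  have injF: "inj_on p F" using insert.prems by (simp add: inj_on_insert)
  show ?case
  proof (cases "p i dvd d")
    case True
    then obtain d' where d': "d = p i * d'" by (elim dvdE)
    have "d' dvd (\<Prod>j\<in>F. p j)" using dv d' pi by (simp add: prime_gt_0_nat)
    then obtain S where S: "S \<subseteq> F" "d' = (\<Prod>j\<in>S. p j)" using insert.IH[OF injF] insert.prems by blast
    have "d = (\<Prod>j\<in>insert i S. p j)" using S d' insert.hyps
      by (subst prod.insert) (auto intro: finite_subset)
    then show ?thesis using S by blast
  next
    case False
    hence "coprime d (p i)" using pi prime_imp_coprime coprime_commute by blast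
    hence "d dvd (\<Prod>j\<in>F. p j)" using dv coprime_dvd_mult_right_iff by blast
    then obtain S where "S \<subseteq> F" "d = (\<Prod>j\<in>S. p j)" using insert.IH[OF injF] insert.prems by blast
    then show ?thesis by blast
  qed
qed

lemma coprime_prods:
  assumes "inj_on p I" "\<And>i. i \<in> I \<Longrightarrow> prime (p i)" "S \<subseteq> I" "T \<subseteq> I" "S \<inter> T = {}"
  shows "coprime (\<Prod>i\<in>S. p i :: nat) (\<Prod>i\<in>T. p i)"
proof (rule prod_coprime_left, rule prod_coprime_right)
  fix i j assume ij: "i \<in> S" "j \<in> T"
  hence ne: "p i \<noteq> p j" using assms by (metis disjoint_iff inj_onD subsetD)
  have "prime (p i)" "prime (p j)" using assms ij by auto
  then show "coprime (p i) (p j)" using ne by (metis primes_dvd_imp_eq prime_imp_coprime)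
qed

lemma real_mono:
  fixes D Phi N q1 q2 :: real
  assumes "D > 0" "0 \<le> Phi" "Phi \<le> D" "1 \<le> q1" "q1 \<le> q2" "N \<ge> 0"
  shows "D*q1 + (N/(D*q1))*(Phi*(q1-1)) - Phi*(q1-1) \<le> D*q2 + (N/(D*q2))*(Phi*(q2-1)) - Phi*(q2-1)"
proof -
  have e: "\<And>q. q \<ge> 1 \<Longrightarrow> D*q + (N/(D*q))*(Phi*(q-1)) - Phi*(q-1) = (D-Phi)*q + Phi + N*Phi/D - N*Phi/D * (1/q)"
    using assms(1) by (simp add: field_simps)
  have a: "(D-Phi)*q1 \<le> (D-Phi)*q2" using assms by (intro mult_left_mono) auto
  have b: "N*Phi/D * (1/q2) \<le> N*Phi/D * (1/q1)" using assms
    by (intro mult_left_mono divide_left_mono) auto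
  show ?thesis using e[OF assms(4)] e[of q2] assms a b by simp
qed

lemma H_real:
  assumes "m dvd n" "m > 0" "n > 0"
  shows "real (H n m) = real m + (real n / real m) * real (totient m) - real (totient m)"
proof -
  have "n div m \<ge> 1" using assms by (metis dvd_div_eq_0_iff less_one linorder_not_less not_gr0)
  hence le: "totient m \<le> (n div m) * totient m" by simp
  have e: "H n m = m + (n div m * totient m - totient m)" using le by (simp add: H_def)
  have "real (n div m) = real n / real m" using assms(1) by (simp add: real_of_nat_div)
  moreover have "real (n div m * totient m - totient m) = real (n div m) * real (totient m) - real (totient m)"
    using le by (simp add: of_nat_diff)
  ultimately show ?thesis unfolding e of_nat_add by simp
qed

context
  fixes p :: "nat \<Rightarrow> nat" and r :: nat
  assumes pr: "\<And>i. i \<in> {1..r} \<Longrightarrow> prime (p i)" and mono: "strict_mono_on {1..r} p"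
begin

lemma inj: "inj_on p {1..r}"
  using mono strict_mono_on_imp_inj_on by blast

lemma P_pos: "S \<subseteq> {1..r} \<Longrightarrow> (\<Prod>i\<in>S. p i) > 0"
  using pr by (intro prod_pos) (auto simp: prime_gt_0_nat)

lemma P_dvd: "S \<subseteq> {1..r} \<Longrightarrow> (\<Prod>i\<in>S. p i) dvd (\<Prod>i\<in>{1..r}. p i)"
  by (intro prod_dvd_prod_subset) auto

lemma P_split: "S \<subseteq> {1..r} \<Longrightarrow> (\<Prod>i\<in>{1..r}. p i) = (\<Prod>i\<in>{1..r}-S. p i) * (\<Prod>i\<in>S. p i)"
  by (rule prod.subset_diff) auto

lemma exchange:
  assumes S: "S \<subseteq> {1..r}" and i: "i \<in> S" and j: "j \<in> {1..r}" "j \<notin> S" and pij: "p j < p i"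
  shows "H (\<Prod>i\<in>{1..r}. p i) (\<Prod>k\<in>insert j (S - {i}). p k) \<le> H (\<Prod>i\<in>{1..r}. p i) (\<Prod>k\<in>S. p k)"
proof -
  define n where "n = (\<Prod>i\<in>{1..r}. p i)"
  define R where "R = S - {i}"
  define D where "D = (\<Prod>k\<in>R. p k)"
  have finR: "finite R" using S by (auto simp: R_def intro: finite_subset)
  have R: "R \<subseteq> {1..r}" using S by (auto simp: R_def)
  have iS: "i \<in> {1..r}" using S i by auto
  have PS: "(\<Prod>k\<in>S. p k) = D * p i"
    using i finR by (simp add: D_def R_def prod.remove[of S, OF finite_subset[OF S]] mult.commute)
  have PS': "(\<Prod>k\<in>insert j R. p k) = D * p j"
    using j finR by (simp add: D_def R_def mult.commute)
  have cop: "\<And>q. q \<in> {1..r} \<Longrightarrow> q \<notin> R \<Longrightarrow> totient (D * p q) = totient D * (p q - 1)"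
  proof -
    fix q assume q: "q \<in> {1..r}" "q \<notin> R"
    have "coprime D (\<Prod>k\<in>{q}. p k)" unfolding D_def
      by (rule coprime_prods[OF inj pr R]) (use q in auto)
    then show "totient (D * p q) = totient D * (p q - 1)"
      using totient_prime[OF pr[OF q(1)]] by (simp add: totient_mult_coprime)
  qed
  have n0: "n > 0" unfolding n_def by (rule P_pos) auto
  have D0: "D > 0" unfolding D_def by (rule P_pos[OF R])
  have dvS: "D * p i dvd n" unfolding n_def PS[symmetric] by (rule P_dvd[OF S])
  have dvS': "D * p j dvd n" unfolding n_def PS'[symmetric] using R j by (intro P_dvd) auto
  have pi0: "p i > 0" "p j > 0" using pr iS j by (auto simp: prime_gt_0_nat)
  have le1: "1 \<le> real (p j)" using pi0 by simp
  have tle: "totient D \<le> D" by (rule totient_le)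
  have t1: "real (totient (D*p j)) = real (totient D) * (real (p j) - 1)"
    using cop[of j] pi0 j by (simp add: of_nat_diff R_def)
  have t2: "real (totient (D*p i)) = real (totient D) * (real (p i) - 1)"
    using cop[of i] pi0 iS by (simp add: of_nat_diff R_def)
  have rm: "real D * real (p j) + (real n/(real D * real (p j)))*(real (totient D) * (real (p j) - 1)) - real (totient D) * (real (p j) - 1)
     \<le> real D * real (p i) + (real n/(real D * real (p i)))*(real (totient D) * (real (p i) - 1)) - real (totient D) * (real (p i) - 1)"
    using D0 tle pij le1 by (intro real_mono) auto
  have h1: "real (H n (D*p j)) = real D * real (p j) + (real n/(real D * real (p j)))*(real (totient D) * (real (p j) - 1)) - real (totient D) * (real (p j) - 1)"
    using H_real[OF dvS' _ n0] t1 D0 pi0 by simp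
  have h2: "real (H n (D*p i)) = real D * real (p i) + (real n/(real D * real (p i)))*(real (totient D) * (real (p i) - 1)) - real (totient D) * (real (p i) - 1)"
    using H_real[OF dvS _ n0] t2 D0 pi0 by simp
  have "real (H n (D * p j)) \<le> real (H n (D * p i))"
    unfolding h1 h2 by (rule rm)
  then show ?thesis using PS PS' by (simp add: n_def R_def)
qed

lemma prefix_min:
  assumes "S \<subseteq> {1..r}"
  shows "H (\<Prod>i\<in>{1..r}. p i) (\<Prod>k\<in>{1..card S}. p k) \<le> H (\<Prod>i\<in>{1..r}. p i) (\<Prod>k\<in>S. p k)"
  using assms
proof (induction "\<Sum>S" arbitrary: S rule: less_induct)
  case less
  define k where "k = card S"
  have finS: "finite S" using less.prems by (auto intro: finite_subset)
  have kr: "k \<le> r" unfolding k_def using card_mono[OF _ less.prems] by simp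
  show ?case
  proof (cases "S = {1..k}")
    case True then show ?thesis by (simp add: k_def[symmetric])
  next
    case False
    obtain j where j: "j \<in> {1..k}" "j \<notin> S"
    proof -
      have "\<not> {1..k} \<subseteq> S"
      proof
        assume "{1..k} \<subseteq> S"
        hence "{1..k} = S" using finS by (intro card_subset_eq) (auto simp: k_def)
        then show False using False by simp
      qed
      then show ?thesis using that by blast
    qed
    obtain i where i: "i \<in> S" "i \<notin> {1..k}"
    proof -
      have "\<not> S \<subseteq> {1..k}"
      proof
        assume "S \<subseteq> {1..k}"
        hence "S = {1..k}" by (intro card_subset_eq) (auto simp: k_def)
        then show False using False by simp
      qed
      then show ?thesis using that by blast
    qed
    have ir: "i \<in> {1..r}" using i less.prems by auto
    have jr: "j \<in> {1..r}" using j kr by auto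
    have ji: "j < i" using i j ir by auto
    have pji: "p j < p i" using strict_mono_onD[OF mono jr ir ji] .
    define S' where "S' = insert j (S - {i})"
    have S'r: "S' \<subseteq> {1..r}" using less.prems jr by (auto simp: S'_def)
    have "card S > 0" using finS i(1) card_gt_0_iff by blast
    hence cS': "card S' = k" using finS i j by (simp add: S'_def k_def)
    have sS: "\<Sum>S = i + \<Sum>(S - {i})" using finS i by (simp add: sum.remove)
    have sS': "\<Sum>S' = j + \<Sum>(S - {i})" using finS j by (simp add: S'_def)
    have lt: "\<Sum>S' < \<Sum>S" using sS sS' ji by simp
    have "H (\<Prod>i\<in>{1..r}. p i) (\<Prod>k\<in>{1..card S'}. p k) \<le> H (\<Prod>i\<in>{1..r}. p i) (\<Prod>k\<in>S'. p k)"
      by (rule less.hyps[OF lt S'r])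
    also have "\<dots> \<le> H (\<Prod>i\<in>{1..r}. p i) (\<Prod>k\<in>S. p k)"
      unfolding S'_def by (rule exchange[OF less.prems i(1) jr j(2) pji])
    finally show ?thesis using cS' by (simp add: k_def)
  qed
qed

end



lemma H_prime_le:
  assumes "prime q" "q dvd n" "n > 0"
  shows "H n q \<le> n"
proof -
  obtain t where t: "n = q * t" using assms(2) by (elim dvdE)
  have t1: "t \<ge> 1" using t assms(3) by (cases t) auto
  obtain u where u: "q = Suc u" using assms(1) by (cases q) auto
  have "n div q = t" using t assms(1) by (simp add: prime_gt_0_nat)
  moreover have "totient q = u" using totient_prime[OF assms(1)] u by simp
  ultimately have "H n q = Suc u + t * u - u" using u by (simp add: H_def)
  also have "\<dots> = 1 + t * u" by simp
  also have "\<dots> \<le> t + t * u" using t1 by simp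
  also have "\<dots> = n" using t u by simp
  finally show ?thesis .
qed

theorem lemma3p1:
  fixes p :: "nat \<Rightarrow> nat" and r n :: nat
  assumes "r \<ge> 3"
    and "\<And>i. i \<in> {1..r} \<Longrightarrow> prime (p i)"
    and "strict_mono_on {1..r} p"
    and "n = (\<Prod>i\<in>{1..r}. p i)"
  shows "pg_min_deg n = Min {pg_deg n (\<Prod>i\<in>{s..r}. p i) | s. 2 \<le> s \<and> s \<le> r}"
proof -
  note pr = assms(2) and mono = assms(3)
  have n0: "n > 0" unfolding assms(4) by (rule P_pos[OF pr mono]) auto
  have dsub: "\<And>d. d dvd n \<Longrightarrow> \<exists>S\<subseteq>{1..r}. d = (\<Prod>i\<in>S. p i)"
    unfolding assms(4) by (rule div_subset[OF _ inj[OF pr mono] pr]) auto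
  have sqf: "coprime (gcd a n) (n div gcd a n)" for a
  proof -
    obtain S where S: "S \<subseteq> {1..r}" "gcd a n = (\<Prod>i\<in>S. p i)" using dsub[of "gcd a n"] by auto
    have "n = (\<Prod>i\<in>{1..r}-S. p i) * (\<Prod>i\<in>S. p i)" unfolding assms(4) by (rule P_split[OF pr mono S(1)])
    hence "n div gcd a n = (\<Prod>i\<in>{1..r}-S. p i)" using S(2) P_pos[OF pr mono S(1)] by simp
    then show ?thesis unfolding S(2) by (metis S(1) coprime_prods[OF inj[OF pr mono] pr] Diff_subset Diff_disjoint)
  qed
  have deg: "\<And>a. a < n \<Longrightarrow> pg_deg n a = H n (n div gcd a n) - 1"
    using deg_eq[OF n0 _ sqf] by blast
  define e where "e s = (\<Prod>i\<in>{s..r}. p i)" for s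
  have e_props: "e s < n \<and> pg_deg n (e s) = H n (\<Prod>i\<in>{1..s-1}. p i) - 1" if s: "2 \<le> s" "s \<le> r" for s
  proof -
    have sub: "{s..r} \<subseteq> {1..r}" using s by auto
    have diff: "{1..r} - {s..r} = {1..s-1}" using s by auto
    have nsplit: "n = (\<Prod>i\<in>{1..s-1}. p i) * e s" unfolding assms(4) e_def
      using P_split[OF pr mono sub] diff by simp
    have e0: "e s > 0" unfolding e_def by (rule P_pos[OF pr mono sub])
    have "p 1 \<le> (\<Prod>i\<in>{1..s-1}. p i)"
    proof -
      have "p 1 dvd (\<Prod>i\<in>{1..s-1}. p i)" using s by (intro dvd_prodI) auto
      moreover have "(\<Prod>i\<in>{1..s-1}. p i) > 0" by (rule P_pos[OF pr mono]) (use s in auto)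
      ultimately show ?thesis by (rule dvd_imp_le)
    qed
    moreover have "p 1 \<ge> 2" using pr[of 1] s by (simp add: prime_ge_2_nat)
    ultimately have "(\<Prod>i\<in>{1..s-1}. p i) \<ge> 2" by simp
    hence lt: "e s < n" using nsplit e0 by (metis less_le_trans mult_le_mono1 mult_2 less_add_same_cancel2 nat_less_le order.refl)
    have "gcd (e s) n = e s" using nsplit by (metis dvd_triv_right gcd_nat.absorb1)
    hence "n div gcd (e s) n = (\<Prod>i\<in>{1..s-1}. p i)" using nsplit e0 by simp
    then show ?thesis using deg[OF lt] lt by simp
  qed
  have cover: "\<exists>s. 2 \<le> s \<and> s \<le> r \<and> pg_deg n (e s) \<le> pg_deg n a" if a: "a < n" for a
  proof -
    define m where "m = n div gcd a n"
    have "m dvd n" unfolding m_def by (metis dvd_div_mult_self dvd_triv_left gcd_dvd2)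
    then obtain S where S: "S \<subseteq> {1..r}" "m = (\<Prod>i\<in>S. p i)" using dsub by blast
    have finS: "finite S" using S(1) by (auto intro: finite_subset)
    define k where "k = card S"
    have kr: "k \<le> r" unfolding k_def using card_mono[OF _ S(1)] by simp
    show ?thesis
    proof (cases "1 \<le> k \<and> k < r")
      case True
      have "pg_deg n (e (k+1)) = H n (\<Prod>i\<in>{1..k}. p i) - 1" using e_props[of "k+1"] True by simp
      also have "\<dots> \<le> H n m - 1" unfolding S(2) k_def assms(4) by (intro diff_le_mono prefix_min[OF pr mono S(1)])
      also have "\<dots> = pg_deg n a" using deg[OF a] by (simp add: m_def)
      finally show ?thesis using True by (intro exI[of _ "k+1"]) auto
    next
      case False
      hence "k = 0 \<or> k = r" using kr by auto
      hence "S = {} \<or> S = {1..r}" using finS S(1) card_subset_eq[of "{1..r}" S] by (auto simp: k_def)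
      hence "m = 1 \<or> m = n" using S(2) assms(4) by auto
      hence Hm: "H n m = n" using n0 by (auto simp: H_def)
      have "p 1 dvd n" unfolding assms(4) using assms(1) by (intro dvd_prodI) auto
      hence "H n (p 1) \<le> n" using pr[of 1] assms(1) n0 by (intro H_prime_le) auto
      hence "pg_deg n (e 2) \<le> pg_deg n a" using e_props[of 2] assms(1) deg[OF a] Hm by (simp add: m_def)
      then show ?thesis using assms(1) by (intro exI[of _ 2]) auto
    qed
  qed
  define A where "A = pg_deg n ` {0..<n}"
  define B where "B = {pg_deg n (\<Prod>i\<in>{s..r}. p i) | s. 2 \<le> s \<and> s \<le> r}"
  have BA: "B \<subseteq> A" using e_props by (auto simp: A_def B_def e_def)
  have Bne: "B \<noteq> {}" using assms(1) by (auto simp: B_def)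
  have finA: "finite A" by (simp add: A_def)
  have "Min A \<in> A" using finA BA Bne by (intro Min_in) auto
  then obtain a where a: "a < n" "Min A = pg_deg n a" by (auto simp: A_def)
  obtain s where s: "2 \<le> s" "s \<le> r" "pg_deg n (e s) \<le> pg_deg n a" using cover[OF a(1)] by blast
  have "pg_deg n (e s) \<in> B" using s by (auto simp: B_def e_def)
  hence "Min B \<le> Min A" using s a finA BA by (metis Min_le finite_subset order_trans)
  moreover have "Min A \<le> Min B" using Min_antimono[OF BA Bne finA] .
  ultimately have "Min A = Min B" by simp
  then show ?thesis by (simp add: pg_min_deg_def A_def B_def)
qed

end
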